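(* Let $I\subset[0,+\infty)$ be an open interval, $\beta\in\{-1,1\}$, $t_0\in I$, $T>0$ with $t_0+\beta T\in I$, $\kappa,\mu\in\,]-1,+\infty[$, $\xi\in[0,1]$. Let the noise $\varpi$ be either a Wiener process with parameter $\sigma^2$ (set $\eta=\sigma^2$) or a Poisson process with intensity $\nu$ (set $\eta=\nu$). Then for the Jacobi estimators of the first order derivative, $$\mathrm{Var}\big[e^{\mu,\kappa}_{\varpi,\beta T}(t_0)\big]=\frac{2\eta}{T}\,\frac{\mu+1}{2\mu+2\kappa+5}\,\frac{B(2\mu+2,2\kappa+3)}{B^2(\kappa+2,\mu+2)},$$ and $$\mathrm{Var}\big[e^{\mu,\kappa}_{\varpi,\beta T,2,\xi}(t_0)\big]=\lambda_1^2\frac{2\eta}{T}\frac{\mu+2}{2\mu+2\kappa+7}\frac{B(2\mu+4,2\kappa+3)}{B^2(\kappa+2,\mu+3)}+\lambda_0^2\frac{2\eta}{T}\frac{\mu+1}{2\mu+2\kappa+7}\frac{B(2\mu+2,2\kappa+5)}{B^2(\kappa+3,\mu+2)}+\lambda_0\lambda_1\frac{2\eta}{T}\frac{B(2\mu+4,2\kappa+4)}{B(\kappa+2,\mu+3)B(\kappa+3,\mu+2)},$$ where $\lambda_1=(\kappa+3)-(\mu+\kappa+5)\xi$ and $\lambda_0=1-\lambda_1$.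
   Context: $B$ is the Beta function. A Wiener process with parameter $\sigma^2$ has mean $0$ and covariance $\sigma^2\min(t,s)$; a Poisson process with intensity $\nu$ has mean $\nu t$ and covariance $\nu\min(t,s)$. For $a,b>-1$ the minimal first-order Jacobi estimator kernel is $p^{a,b}_{\beta T}(\tau)=\frac{1}{\beta T}\frac{\Gamma(a+b+4)}{\Gamma(b+2)\Gamma(a+2)}\big((a+b+2)\tau-(b+1)\big)(1-\tau)^{a}\tau^{b}$, and $e^{\mu,\kappa}_{\varpi,\beta T}(t_0)=\int_0^1p^{\mu,\kappa}_{\beta T}(\tau)\varpi(t_0+\beta T\tau)d\tau$ (mean-square integral). The affine first-order Jacobi estimator with $N=2$ has kernel $p^{\mu,\kappa}_{\beta T,2,\xi}=\lambda_1 p^{\mu+1,\kappa}_{\beta T}+\lambda_0p^{\mu,\kappa+1}_{\beta T}$ and noise error contribution $e^{\mu,\kappa}_{\varpi,\beta T,2,\xi}(t_0)=\int_0^1p^{\mu,\kappa}_{\beta T,2,\xi}(\tau)\varpi(t_0+\beta T\tau)d\tau$. *)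

theory Defs
  imports "HOL-Probability.Probability"
begin

definition jacobi_kernel :: "real \<Rightarrow> real \<Rightarrow> real \<Rightarrow> real \<Rightarrow> real" where
  "jacobi_kernel a b h \<tau> =
     (1 / h) * (Gamma (a + b + 4) / (Gamma (b + 2) * Gamma (a + 2)))
     * ((a + b + 2) * \<tau> - (b + 1)) * (1 - \<tau>) powr a * \<tau> powr b"

definition jacobi_lambda1 :: "real \<Rightarrow> real \<Rightarrow> real \<Rightarrow> real" where
  "jacobi_lambda1 \<mu> \<kappa> \<xi> = (\<kappa> + 3) - (\<mu> + \<kappa> + 5) * \<xi>"

definition jacobi_lambda0 :: "real \<Rightarrow> real \<Rightarrow> real \<Rightarrow> real" where
  "jacobi_lambda0 \<mu> \<kappa> \<xi> = 1 - jacobi_lambda1 \<mu> \<kappa> \<xi>"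

definition jacobi_kernel_affine2 :: "real \<Rightarrow> real \<Rightarrow> real \<Rightarrow> real \<Rightarrow> real \<Rightarrow> real" where
  "jacobi_kernel_affine2 \<mu> \<kappa> \<xi> h \<tau> =
     jacobi_lambda1 \<mu> \<kappa> \<xi> * jacobi_kernel (\<mu> + 1) \<kappa> h \<tau>
   + jacobi_lambda0 \<mu> \<kappa> \<xi> * jacobi_kernel \<mu> (\<kappa> + 1) h \<tau>"

definition rv_variance :: "'a measure \<Rightarrow> ('a \<Rightarrow> real) \<Rightarrow> real" where
  "rv_variance M Y = integral\<^sup>L M (\<lambda>\<omega>. (Y \<omega> - integral\<^sup>L M Y)\<^sup>2)"

definition second_order_process ::
  "'a measure \<Rightarrow> (real \<Rightarrow> 'a \<Rightarrow> real) \<Rightarrow> (real \<Rightarrow> real) \<Rightarrow> (real \<Rightarrow> real \<Rightarrow> real) \<Rightarrow> bool" where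
  "second_order_process M X m c \<longleftrightarrow>
     (\<forall>t\<ge>0. X t \<in> borel_measurable M \<and> integrable M (\<lambda>\<omega>. (X t \<omega>)\<^sup>2)
              \<and> integral\<^sup>L M (X t) = m t) \<and>
     (\<forall>t s. t \<ge> 0 \<longrightarrow> s \<ge> 0 \<longrightarrow>
        integral\<^sup>L M (\<lambda>\<omega>. (X t \<omega> - m t) * (X s \<omega> - m s)) = c t s)"

definition wiener_process_param :: "'a measure \<Rightarrow> (real \<Rightarrow> 'a \<Rightarrow> real) \<Rightarrow> real \<Rightarrow> bool" where
  "wiener_process_param M X \<sigma>2 \<longleftrightarrow>
     \<sigma>2 > 0 \<and> second_order_process M X (\<lambda>_. 0) (\<lambda>t s. \<sigma>2 * min t s)"

definition poisson_process_intensity :: "'a measure \<Rightarrow> (real \<Rightarrow> 'a \<Rightarrow> real) \<Rightarrow> real \<Rightarrow> bool" where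
  "poisson_process_intensity M X \<nu> \<longleftrightarrow>
     \<nu> > 0 \<and> second_order_process M X (\<lambda>t. \<nu> * t) (\<lambda>t s. \<nu> * min t s)"

text \<open>Y is the mean-square integral over [0,1] of tau |-> f tau * Z tau, characterised
  weakly (as an element of L2(M)): for every square-integrable W,
  E[Y W] = int_0^1 f(tau) E[Z(tau) W] dtau.\<close>
definition ms_integral01 ::
  "'a measure \<Rightarrow> (real \<Rightarrow> real) \<Rightarrow> (real \<Rightarrow> 'a \<Rightarrow> real) \<Rightarrow> ('a \<Rightarrow> real) \<Rightarrow> bool" where
  "ms_integral01 M f Z Y \<longleftrightarrow>
     Y \<in> borel_measurable M \<and> integrable M (\<lambda>\<omega>. (Y \<omega>)\<^sup>2) \<and>
     (\<forall>W. W \<in> borel_measurable M \<longrightarrow> integrable M (\<lambda>\<omega>. (W \<omega>)\<^sup>2) \<longrightarrow>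
        set_integrable lborel {0..1} (\<lambda>\<tau>. f \<tau> * integral\<^sup>L M (\<lambda>\<omega>. Z \<tau> \<omega> * W \<omega>)) \<and>
        integral\<^sup>L M (\<lambda>\<omega>. Y \<omega> * W \<omega>) =
          (LINT \<tau>:{0..1}|lborel. f \<tau> * integral\<^sup>L M (\<lambda>\<omega>. Z \<tau> \<omega> * W \<omega>)))"

end

theory Submission
  imports Defs
begin


lemma L2_prod_int:
  fixes U V :: "'a \<Rightarrow> real"
  assumes "U \<in> borel_measurable M" "V \<in> borel_measurable M"
    "integrable M (\<lambda>\<omega>. (U \<omega>)\<^sup>2)" "integrable M (\<lambda>\<omega>. (V \<omega>)\<^sup>2)"
  shows "integrable M (\<lambda>\<omega>. U \<omega> * V \<omega>)"
proof (rule Bochner_Integration.integrable_bound)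
  show "integrable M (\<lambda>\<omega>. (U \<omega>)\<^sup>2 + (V \<omega>)\<^sup>2)" using assms by simp
  show "(\<lambda>\<omega>. U \<omega> * V \<omega>) \<in> borel_measurable M" using assms by simp
  show "AE x in M. norm (U x * V x) \<le> norm ((U x)\<^sup>2 + (V x)\<^sup>2)"
  proof (rule AE_I2)
    fix x
    have sq: "0 \<le> (\<bar>U x\<bar> - \<bar>V x\<bar>)\<^sup>2" by simp
    then have "2 * (\<bar>U x\<bar> * \<bar>V x\<bar>) \<le> (U x)\<^sup>2 + (V x)\<^sup>2"
      by (simp add: power2_diff power2_abs)
    moreover have "0 \<le> \<bar>U x\<bar> * \<bar>V x\<bar>" by simp
    ultimately have "\<bar>U x * V x\<bar> \<le> (U x)\<^sup>2 + (V x)\<^sup>2" unfolding abs_mult by linarith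
    then show "norm (U x * V x) \<le> norm ((U x)\<^sup>2 + (V x)\<^sup>2)" by simp
  qed
qed

lemma var_formula:
  fixes M :: "'a measure" and Z :: "real \<Rightarrow> 'a \<Rightarrow> real" and f m :: "real \<Rightarrow> real"
    and c :: "real \<Rightarrow> real \<Rightarrow> real" and Y :: "'a \<Rightarrow> real"
  assumes P: "prob_space M"
  and Zmeas: "\<And>\<tau>. \<tau> \<in> {0..1} \<Longrightarrow> Z \<tau> \<in> borel_measurable M"
  and Zsq: "\<And>\<tau>. \<tau> \<in> {0..1} \<Longrightarrow> integrable M (\<lambda>\<omega>. (Z \<tau> \<omega>)\<^sup>2)"
  and Zmean: "\<And>\<tau>. \<tau> \<in> {0..1} \<Longrightarrow> integral\<^sup>L M (Z \<tau>) = m \<tau>"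
  and Zcov: "\<And>\<tau> s. \<tau> \<in> {0..1} \<Longrightarrow> s \<in> {0..1} \<Longrightarrow>
      integral\<^sup>L M (\<lambda>\<omega>. (Z s \<omega> - m s) * (Z \<tau> \<omega> - m \<tau>)) = c s \<tau>"
  and Y: "ms_integral01 M f Z Y"
  shows "(\<forall>\<tau>\<in>{0..1}. set_integrable lborel {0..1} (\<lambda>s. f s * c s \<tau>))
     \<and> set_integrable lborel {0..1} (\<lambda>\<tau>. f \<tau> * (LINT s:{0..1}|lborel. f s * c s \<tau>))
     \<and> rv_variance M Y = (LINT \<tau>:{0..1}|lborel. f \<tau> * (LINT s:{0..1}|lborel. f s * c s \<tau>))"
proof -
  interpret prob_space M by (rule P)
  have Ymeas: "Y \<in> borel_measurable M" and Ysq: "integrable M (\<lambda>\<omega>. (Y \<omega>)\<^sup>2)"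
    and YW: "\<And>W. W \<in> borel_measurable M \<Longrightarrow> integrable M (\<lambda>\<omega>. (W \<omega>)\<^sup>2) \<Longrightarrow>
        set_integrable lborel {0..1} (\<lambda>\<tau>. f \<tau> * integral\<^sup>L M (\<lambda>\<omega>. Z \<tau> \<omega> * W \<omega>)) \<and>
        integral\<^sup>L M (\<lambda>\<omega>. Y \<omega> * W \<omega>) =
          (LINT \<tau>:{0..1}|lborel. f \<tau> * integral\<^sup>L M (\<lambda>\<omega>. Z \<tau> \<omega> * W \<omega>))"
    using Y unfolding ms_integral01_def by blast+
  have one: "integrable M (\<lambda>\<omega>. ((\<lambda>_. 1::real) \<omega>)\<^sup>2)" by simp
  have Yint: "integrable M Y"
    using L2_prod_int[OF Ymeas _ Ysq one] by simp
  have Zint: "integrable M (Z \<tau>)" if "\<tau> \<in> {0..1}" for \<tau>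
    using L2_prod_int[OF Zmeas[OF that] _ Zsq[OF that] one] by simp
  define mY where "mY = integral\<^sup>L M Y"
  have E1: "set_integrable lborel {0..1} (\<lambda>\<tau>. f \<tau> * integral\<^sup>L M (\<lambda>\<omega>. Z \<tau> \<omega> * 1)) \<and>
        integral\<^sup>L M (\<lambda>\<omega>. Y \<omega> * 1) =
          (LINT \<tau>:{0..1}|lborel. f \<tau> * integral\<^sup>L M (\<lambda>\<omega>. Z \<tau> \<omega> * 1))"
    using YW[of "\<lambda>_. 1"] by simp
  have fm_int: "set_integrable lborel {0..1} (\<lambda>\<tau>. f \<tau> * m \<tau>)"
    using E1 by (subst set_integrable_cong[OF refl refl, where f'="\<lambda>\<tau>. f \<tau> * integral\<^sup>L M (\<lambda>\<omega>. Z \<tau> \<omega> * 1)"])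
      (auto simp: Zmean)
  have mY_eq: "mY = (LINT \<tau>:{0..1}|lborel. f \<tau> * m \<tau>)"
    using E1 unfolding mY_def
    by (simp, intro set_lebesgue_integral_cong) (auto simp: Zmean)
  have ZZ: "integral\<^sup>L M (\<lambda>\<omega>. Z s \<omega> * Z \<tau> \<omega>) = c s \<tau> + m s * m \<tau>"
    if s: "s \<in> {0..1}" and t: "\<tau> \<in> {0..1}" for s \<tau>
  proof -
    have i1: "integrable M (\<lambda>\<omega>. Z s \<omega> * Z \<tau> \<omega>)"
      using L2_prod_int[OF Zmeas[OF s] Zmeas[OF t] Zsq[OF s] Zsq[OF t]] .
    have "(\<lambda>\<omega>. (Z s \<omega> - m s) * (Z \<tau> \<omega> - m \<tau>)) =
        (\<lambda>\<omega>. (Z s \<omega> * Z \<tau> \<omega> - m \<tau> * Z s \<omega>) - (m s * Z \<tau> \<omega> - m s * m \<tau>))"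
      by (auto simp: algebra_simps)
    then have "c s \<tau> = integral\<^sup>L M (\<lambda>\<omega>. (Z s \<omega> * Z \<tau> \<omega> - m \<tau> * Z s \<omega>) - (m s * Z \<tau> \<omega> - m s * m \<tau>))"
      using Zcov[OF t s] by simp
    also have "\<dots> = (integral\<^sup>L M (\<lambda>\<omega>. Z s \<omega> * Z \<tau> \<omega>) - m \<tau> * m s) - (m s * m \<tau> - m s * m \<tau>)"
      using i1 Zint[OF s] Zint[OF t] Zmean[OF s] Zmean[OF t] by (simp add: prob_space)
    finally show ?thesis by simp
  qed
  define \<Psi> where "\<Psi> \<tau> = (LINT s:{0..1}|lborel. f s * c s \<tau>)" for \<tau>
  have inner: "set_integrable lborel {0..1} (\<lambda>s. f s * c s \<tau>) \<and>
      integral\<^sup>L M (\<lambda>\<omega>. Z \<tau> \<omega> * Y \<omega>) = \<Psi> \<tau> + m \<tau> * mY" if t: "\<tau> \<in> {0..1}" for \<tau>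
  proof -
    have E: "set_integrable lborel {0..1} (\<lambda>s. f s * integral\<^sup>L M (\<lambda>\<omega>. Z s \<omega> * Z \<tau> \<omega>)) \<and>
        integral\<^sup>L M (\<lambda>\<omega>. Y \<omega> * Z \<tau> \<omega>) =
          (LINT s:{0..1}|lborel. f s * integral\<^sup>L M (\<lambda>\<omega>. Z s \<omega> * Z \<tau> \<omega>))"
      using YW[OF Zmeas[OF t] Zsq[OF t]] .
    have E2: "set_integrable lborel {0..1} (\<lambda>s. f s * (c s \<tau> + m s * m \<tau>))"
      using E set_integrable_cong[OF refl refl, of "{0..1}" "\<lambda>s. f s * (c s \<tau> + m s * m \<tau>)" "\<lambda>s. f s * integral\<^sup>L M (\<lambda>\<omega>. Z s \<omega> * Z \<tau> \<omega>)" lborel]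
        ZZ[OF _ t] by auto
    have E3: "integral\<^sup>L M (\<lambda>\<omega>. Y \<omega> * Z \<tau> \<omega>) = (LINT s:{0..1}|lborel. f s * (c s \<tau> + m s * m \<tau>))"
      using E ZZ[OF _ t] by (simp, intro set_lebesgue_integral_cong) auto
    have fmt: "set_integrable lborel {0..1} (\<lambda>s. m \<tau> * (f s * m s))"
      using fm_int by auto
    have eqf: "(\<lambda>s. f s * c s \<tau>) = (\<lambda>s. f s * (c s \<tau> + m s * m \<tau>) - m \<tau> * (f s * m s))"
      by (auto simp: algebra_simps)
    have I: "set_integrable lborel {0..1} (\<lambda>s. f s * c s \<tau>)"
      unfolding eqf using E2 fmt by (rule set_integral_diff)
    have "\<Psi> \<tau> = (LINT s:{0..1}|lborel. f s * (c s \<tau> + m s * m \<tau>)) - m \<tau> * mY"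
      unfolding \<Psi>_def eqf using E2 fmt by (simp add: set_integral_diff(2) mY_eq)
    with E3 show ?thesis using I by (simp add: mult.commute)
  qed
  have EY: "set_integrable lborel {0..1} (\<lambda>\<tau>. f \<tau> * integral\<^sup>L M (\<lambda>\<omega>. Z \<tau> \<omega> * Y \<omega>)) \<and>
        integral\<^sup>L M (\<lambda>\<omega>. Y \<omega> * Y \<omega>) =
          (LINT \<tau>:{0..1}|lborel. f \<tau> * integral\<^sup>L M (\<lambda>\<omega>. Z \<tau> \<omega> * Y \<omega>))"
    using YW[OF Ymeas Ysq] .
  have EY2: "set_integrable lborel {0..1} (\<lambda>\<tau>. f \<tau> * (\<Psi> \<tau> + m \<tau> * mY))"
    using EY by (subst set_integrable_cong[OF refl refl, where f'="\<lambda>\<tau>. f \<tau> * integral\<^sup>L M (\<lambda>\<omega>. Z \<tau> \<omega> * Y \<omega>)"])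
      (auto simp: inner)
  have EY3: "integral\<^sup>L M (\<lambda>\<omega>. Y \<omega> * Y \<omega>) = (LINT \<tau>:{0..1}|lborel. f \<tau> * (\<Psi> \<tau> + m \<tau> * mY))"
    using EY by (simp, intro set_lebesgue_integral_cong) (auto simp: inner)
  have fmt: "set_integrable lborel {0..1} (\<lambda>s. mY * (f s * m s))"
    using fm_int by auto
  have eqf: "(\<lambda>s. f s * \<Psi> s) = (\<lambda>s. f s * (\<Psi> s + m s * mY) - mY * (f s * m s))"
    by (auto simp: algebra_simps)
  have I: "set_integrable lborel {0..1} (\<lambda>s. f s * \<Psi> s)"
    unfolding eqf using EY2 fmt by (rule set_integral_diff)
  have V: "(LINT s:{0..1}|lborel. f s * \<Psi> s) = integral\<^sup>L M (\<lambda>\<omega>. Y \<omega> * Y \<omega>) - mY * mY"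
    unfolding eqf EY3 using EY2 fmt by (simp add: set_integral_diff(2) mY_eq)
  have "rv_variance M Y = integral\<^sup>L M (\<lambda>\<omega>. (Y \<omega>)\<^sup>2) - mY\<^sup>2"
    unfolding rv_variance_def mY_def using variance_eq[OF Yint Ysq] by simp
  also have "\<dots> = (LINT s:{0..1}|lborel. f s * \<Psi> s)"
    using V by (simp add: power2_eq_square)
  finally show ?thesis using inner I unfolding \<Psi>_def by blast
qed




lemma ftc_real:
  fixes F F' :: "real \<Rightarrow> real"
  assumes "u \<le> v" "continuous_on {u..v} F"
    "\<And>x. x \<in> {u<..<v} \<Longrightarrow> (F has_real_derivative F' x) (at x)"
  shows "(F' has_integral (F v - F u)) {u..v}"
  using assms by (intro fundamental_theorem_of_calculus_interior)
    (auto simp: has_real_derivative_iff_has_vector_derivative)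

locale calc_setup =
  fixes g f :: "real \<Rightarrow> real" and h :: real
  assumes h: "h \<noteq> 0" and gc: "continuous_on {0..1} g" and g0: "g 0 = 0" and g1: "g 1 = 0"
    and gd: "\<And>x. x \<in> {0<..<1} \<Longrightarrow> (g has_real_derivative (- h * f x)) (at x)"
begin

definition "G \<tau> = integral {0..\<tau>} g"

lemma scale: "((\<lambda>x. - h * F x) has_integral I) S \<Longrightarrow> (F has_integral (- I / h)) S"
proof -
  assume a: "((\<lambda>x. - h * F x) has_integral I) S"
  have "((\<lambda>x. (- h * F x) * (-1/h)) has_integral (I * (-1/h))) S"
    using has_integral_mult_left[OF a] .
  moreover have "(\<lambda>x. (- h * F x) * (-1/h)) = F" using h by auto
  ultimately show ?thesis by simp
qed

lemma P_f:
  assumes "0 \<le> u" "u \<le> v" "v \<le> 1"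
  shows "(f has_integral ((g u - g v) / h)) {u..v}"
proof -
  have "((\<lambda>x. - h * f x) has_integral (g v - g u)) {u..v}"
    using assms by (intro ftc_real continuous_on_subset[OF gc] gd) auto
  from scale[OF this] show ?thesis by (simp add: divide_simps)
qed

lemma P_sf:
  assumes "0 \<le> u" "u \<le> v" "v \<le> 1"
  shows "((\<lambda>s. s * f s) has_integral ((u * g u - v * g v + integral {u..v} g) / h)) {u..v}"
proof -
  have c: "continuous_on {u..v} g" using assms by (intro continuous_on_subset[OF gc]) auto
  have "((\<lambda>s. g s + s * (- h * f s)) has_integral (v * g v - u * g u)) {u..v}"
  proof (rule ftc_real[where F="\<lambda>s. s * g s"])
    show "continuous_on {u..v} (\<lambda>s. s * g s)" using c by (intro continuous_intros)
    fix x assume x: "x \<in> {u<..<v}"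
    then have "x \<in> {0<..<1}" using assms by auto
    from gd[OF this] show "((\<lambda>s. s * g s) has_real_derivative g x + x * (- h * f x)) (at x)"
      by (auto intro!: derivative_eq_intros)
  qed (use assms in auto)
  moreover have "(g has_integral integral {u..v} g) {u..v}"
    using c by (intro integrable_integral integrable_continuous_real)
  ultimately have "((\<lambda>s. (g s + s * (- h * f s)) - g s) has_integral (v * g v - u * g u - integral {u..v} g)) {u..v}"
    by (rule has_integral_diff)
  then have "((\<lambda>s. - h * (s * f s)) has_integral (v * g v - u * g u - integral {u..v} g)) {u..v}"
    by (simp add: algebra_simps)
  from scale[OF this] show ?thesis by (rule has_integral_eq_rhs) (simp add: algebra_simps)
qed

lemma int_f: "(f has_integral 0) {0..1}"
  using P_f[of 0 1] by (simp add: g0 g1)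

lemma int_min:
  assumes t: "\<tau> \<in> {0..1}"
  shows "((\<lambda>s. f s * min s \<tau>) has_integral G \<tau> / h) {0..1}"
proof -
  have a: "((\<lambda>s. f s * min s \<tau>) has_integral ((0 * g 0 - \<tau> * g \<tau> + integral {0..\<tau>} g) / h)) {0..\<tau>}"
    using P_sf[of 0 \<tau>] t by (subst has_integral_cong[where g="\<lambda>s. s * f s"]) (auto simp: min_def)
  have b: "((\<lambda>s. f s * min s \<tau>) has_integral ((g \<tau> - g 1) / h * \<tau>)) {\<tau>..1}"
    using has_integral_mult_left[OF P_f[of \<tau> 1], of \<tau>] t
    by (subst has_integral_cong[where g="\<lambda>s. f s * \<tau>"]) (auto simp: min_def)
  have "((\<lambda>s. f s * min s \<tau>) has_integral
      ((0 * g 0 - \<tau> * g \<tau> + integral {0..\<tau>} g) / h + (g \<tau> - g 1) / h * \<tau>)) {0..1}"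
    using t by (intro has_integral_combine[OF _ _ a b]) auto
  then show ?thesis by (rule has_integral_eq_rhs) (simp add: G_def g0 g1 h field_simps)
qed

lemma int_max:
  assumes t: "\<tau> \<in> {0..1}"
  shows "((\<lambda>s. f s * max s \<tau>) has_integral (G 1 - G \<tau>) / h) {0..1}"
proof -
  have a: "((\<lambda>s. f s * max s \<tau>) has_integral ((g 0 - g \<tau>) / h * \<tau>)) {0..\<tau>}"
    using has_integral_mult_left[OF P_f[of 0 \<tau>], of \<tau>] t
    by (subst has_integral_cong[where g="\<lambda>s. f s * \<tau>"]) (auto simp: max_def)
  have b: "((\<lambda>s. f s * max s \<tau>) has_integral ((\<tau> * g \<tau> - 1 * g 1 + integral {\<tau>..1} g) / h)) {\<tau>..1}"
    using P_sf[of \<tau> 1] t by (subst has_integral_cong[where g="\<lambda>s. s * f s"]) (auto simp: max_def)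
  have "((\<lambda>s. f s * max s \<tau>) has_integral
      ((g 0 - g \<tau>) / h * \<tau> + (\<tau> * g \<tau> - 1 * g 1 + integral {\<tau>..1} g) / h)) {0..1}"
    using t by (intro has_integral_combine[OF _ _ a b]) auto
  moreover have "integral {0..\<tau>} g + integral {\<tau>..1} g = integral {0..1} g"
    using t by (intro Henstock_Kurzweil_Integration.integral_combine integrable_continuous_real gc) auto
  ultimately show ?thesis apply - by (erule has_integral_eq_rhs) (simp add: G_def g0 g1 h field_simps)
qed

lemma int_fG:
  "((\<lambda>\<tau>. f \<tau> * G \<tau>) has_integral integral {0..1} (\<lambda>x. (g x)\<^sup>2) / h) {0..1}"
proof -
  have Gd: "(G has_real_derivative g x) (at x within {0..1})" if "x \<in> {0..1}" for x
    unfolding G_def[abs_def] using integral_has_real_derivative[OF gc that] .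
  have Gc: "continuous_on {0..1} G" by (rule DERIV_continuous_on[OF Gd])
  have "((\<lambda>x. - h * f x * G x + g x * g x) has_integral (g 1 * G 1 - g 0 * G 0)) {0..1}"
  proof (rule ftc_real[where F="\<lambda>x. g x * G x"])
    show "continuous_on {0..1} (\<lambda>x. g x * G x)" using gc Gc by (intro continuous_intros)
    fix x :: real assume x: "x \<in> {0<..<1}"
    have "(G has_real_derivative g x) (at x)"
      using Gd[of x] x at_within_interior[of x "{0..1}"] by auto
    with gd[OF x] show "((\<lambda>x. g x * G x) has_real_derivative - h * f x * G x + g x * g x) (at x)"
      by (auto intro!: derivative_eq_intros)
  qed auto
  moreover have "((\<lambda>x. (g x)\<^sup>2) has_integral integral {0..1} (\<lambda>x. (g x)\<^sup>2)) {0..1}"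
    using gc by (intro integrable_integral integrable_continuous_real continuous_intros)
  ultimately have "((\<lambda>x. (- h * f x * G x + g x * g x) - (g x)\<^sup>2) has_integral (0 - integral {0..1} (\<lambda>x. (g x)\<^sup>2))) {0..1}"
    using g0 g1 by (intro has_integral_diff) auto
  then have "((\<lambda>x. - h * (f x * G x)) has_integral (0 - integral {0..1} (\<lambda>x. (g x)\<^sup>2))) {0..1}"
    by (simp add: power2_eq_square algebra_simps)
  from scale[OF this] show ?thesis by simp
qed

end




definition gab :: "real \<Rightarrow> real \<Rightarrow> real \<Rightarrow> real" where
  "gab a b x = Gamma (a + b + 4) / (Gamma (b + 2) * Gamma (a + 2)) * ((1 - x) powr (a + 1) * x powr (b + 1))"

lemma gab_cont: "a > -1 \<Longrightarrow> b > -1 \<Longrightarrow> continuous_on {0..1} (gab a b)"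
  unfolding gab_def[abs_def]
  by (intro continuous_intros continuous_on_powr') auto

lemma gab_0: "b > -1 \<Longrightarrow> gab a b 0 = 0" by (simp add: gab_def)
lemma gab_1: "gab a b 1 = 0" by (simp add: gab_def)

lemma gab_deriv:
  assumes h: "h \<noteq> 0" and xx: "x \<in> {0<..<1}"
  shows "(gab a b has_real_derivative (- h * jacobi_kernel a b h x)) (at x)"
proof -
  have x: "0 < x" "x < 1" using xx by auto
  define K where "K = Gamma (a + b + 4) / (Gamma (b + 2) * Gamma (a + 2))"
  have d1: "((\<lambda>x. (1 - x) powr (a + 1)) has_real_derivative ((a + 1) * (1 - x) powr (a + 1 - 1) * (- 1))) (at x)"
    using x by (intro DERIV_chain2[OF has_real_derivative_powr]) (auto intro!: derivative_eq_intros)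
  have d2: "((\<lambda>x. x powr (b + 1)) has_real_derivative ((b + 1) * x powr (b + 1 - 1))) (at x)"
    using x by (intro has_real_derivative_powr)
  note d = DERIV_cmult[OF DERIV_mult[OF d1 d2], of K]
  have e1: "(1-x) powr (a+1) = (1-x) powr a * (1-x)" using x by (simp add: powr_add)
  have e2: "x powr (b+1) = x powr b * x" using x by (simp add: powr_add)
  have jk: "- h * jacobi_kernel a b h x = - (K * (((a + b + 2) * x - (b + 1)) * (1 - x) powr a * x powr b))"
    unfolding jacobi_kernel_def K_def using h by simp
  show ?thesis unfolding gab_def[abs_def] K_def[symmetric]
    apply (rule DERIV_cong[OF d])
    unfolding jk e1 e2 using x by (simp add: algebra_simps)
qed

lemma C_Beta: "Gamma (a + b + 4) / (Gamma (b + 2) * Gamma (a + 2)) = 1 / Beta (b + 2) (a + 2)"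
  by (simp add: Beta_def add_ac)

lemma gab_prod:
  assumes "a > -1" "b > -1" "a' > -1" "b' > -1"
  shows "((\<lambda>x. gab a b x * gab a' b' x) has_integral
     (1 / Beta (b + 2) (a + 2)) * (1 / Beta (b' + 2) (a' + 2)) * Beta (b + b' + 3) (a + a' + 3)) {0..1}"
proof -
  have B: "((\<lambda>t. t powr ((b + b' + 3) - 1) * (1 - t) powr ((a + a' + 3) - 1)) has_integral Beta (b + b' + 3) (a + a' + 3)) {0..1}"
    using assms by (intro has_integral_Beta_real) auto
  have "((\<lambda>t. ((1 / Beta (b + 2) (a + 2)) * (1 / Beta (b' + 2) (a' + 2))) * (t powr ((b + b' + 3) - 1) * (1 - t) powr ((a + a' + 3) - 1))) has_integral
     (1 / Beta (b + 2) (a + 2)) * (1 / Beta (b' + 2) (a' + 2)) * Beta (b + b' + 3) (a + a' + 3)) {0..1}"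
    by (rule has_integral_mult_right[OF B])
  moreover have pw: "(\<lambda>t. ((1 / Beta (b + 2) (a + 2)) * (1 / Beta (b' + 2) (a' + 2))) * (t powr ((b + b' + 3) - 1) * (1 - t) powr ((a + a' + 3) - 1))) x
      = gab a b x * gab a' b' x" for x :: real
  proof -
    have p1: "(1 - x) powr (a + 1) * (1 - x) powr (a' + 1) = (1 - x) powr ((a + a' + 3) - 1)"
      by (simp add: powr_add[symmetric] algebra_simps)
    have p2: "x powr (b + 1) * x powr (b' + 1) = x powr ((b + b' + 3) - 1)"
      by (simp add: powr_add[symmetric] algebra_simps)
    show ?thesis
      unfolding gab_def C_Beta p1[symmetric] p2[symmetric] by (simp add: algebra_simps)
  qed
  ultimately show ?thesis by (subst (asm) pw[abs_def])
qed




lemma general_var: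
  fixes M :: "'a measure" and X :: "real \<Rightarrow> 'a \<Rightarrow> real"
    and I :: "real set" and \<beta> t0 T \<eta> :: real and Y :: "'a \<Rightarrow> real" and f g :: "real \<Rightarrow> real"
  assumes P: "prob_space M"
    and Iint: "is_interval I" and I0: "I \<subseteq> {0..}"
    and \<beta>: "\<beta> \<in> {-1, 1}" and t0: "t0 \<in> I" and T: "T > 0" and t1: "t0 + \<beta> * T \<in> I"
    and noise: "(\<exists>\<sigma>2. wiener_process_param M X \<sigma>2 \<and> \<eta> = \<sigma>2)
               \<or> (\<exists>\<nu>. poisson_process_intensity M X \<nu> \<and> \<eta> = \<nu>)"
    and Y: "ms_integral01 M f (\<lambda>\<tau>. X (t0 + \<beta> * T * \<tau>)) Y"
    and cs: "calc_setup g f (\<beta> * T)"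
  shows "rv_variance M Y = \<eta> / T * integral {0..1} (\<lambda>x. (g x)\<^sup>2)"
proof -
  interpret calc_setup g f "\<beta> * T" by (rule cs)
  obtain m where SOP: "second_order_process M X m (\<lambda>t s. \<eta> * min t s)"
    using noise
  proof (elim disjE exE conjE)
    fix \<sigma>2 assume "wiener_process_param M X \<sigma>2" "\<eta> = \<sigma>2"
    then have "second_order_process M X (\<lambda>_. 0) (\<lambda>t s. \<eta> * min t s)"
      unfolding wiener_process_param_def by simp
    then show thesis by (rule that)
  next
    fix \<nu> assume "poisson_process_intensity M X \<nu>" "\<eta> = \<nu>"
    then have "second_order_process M X (\<lambda>t. \<nu> * t) (\<lambda>t s. \<eta> * min t s)"
      unfolding poisson_process_intensity_def by simp
    then show thesis by (rule that)
  qed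
  define t where "t \<tau> = t0 + \<beta> * T * \<tau>" for \<tau>
  have tI: "t \<tau> \<in> I" if "\<tau> \<in> {0..1}" for \<tau>
  proof (cases "\<beta> = 1")
    case True
    then show ?thesis using that T
      by (intro mem_is_interval_1_I[OF Iint t0 t1]) (auto simp: t_def)
  next
    case False
    then have b: "\<beta> = -1" using \<beta> by auto
    show ?thesis using that T b
      by (intro mem_is_interval_1_I[OF Iint t1 t0]) (auto simp: t_def mult_left_le)
  qed
  have tpos: "t \<tau> \<ge> 0" if "\<tau> \<in> {0..1}" for \<tau> using tI[OF that] I0 by auto
  define c where "c s \<tau> = \<eta> * min (t s) (t \<tau>)" for s \<tau>
  have VF: "(\<forall>\<tau>\<in>{0..1}. set_integrable lborel {0..1} (\<lambda>s. f s * c s \<tau>))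
     \<and> set_integrable lborel {0..1} (\<lambda>\<tau>. f \<tau> * (LINT s:{0..1}|lborel. f s * c s \<tau>))
     \<and> rv_variance M Y = (LINT \<tau>:{0..1}|lborel. f \<tau> * (LINT s:{0..1}|lborel. f s * c s \<tau>))"
  proof (rule var_formula[where Z="\<lambda>\<tau>. X (t \<tau>)" and m="\<lambda>\<tau>. m (t \<tau>)"])
    show "prob_space M" by (rule P)
    show "ms_integral01 M f (\<lambda>\<tau>. X (t \<tau>)) Y" using Y unfolding t_def .
  qed (use SOP tpos in \<open>auto simp: second_order_process_def c_def\<close>)
  define \<Psi> where "\<Psi> \<tau> = (LINT s:{0..1}|lborel. f s * c s \<tau>)" for \<tau>
  define I2 where "I2 = integral {0..1} (\<lambda>x. (g x)\<^sup>2)"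
  have fint: "(f has_integral 0) {0..1}" by (rule int_f)
  show ?thesis
  proof (cases "\<beta> = 1")
    case True
    have ceq: "c s \<tau> = \<eta> * t0 * 1 + \<eta> * (\<beta> * T) * min s \<tau>" for s \<tau>
      using T True by (simp add: c_def t_def min_def algebra_simps)
    have PsiE: "\<Psi> \<tau> = \<eta> * G \<tau>" if tau: "\<tau> \<in> {0..1}" for \<tau>
    proof -
      have "\<Psi> \<tau> = integral {0..1} (\<lambda>s. f s * c s \<tau>)"
        unfolding \<Psi>_def using VF tau by (intro set_borel_integral_eq_integral(2)) auto
      also have "\<dots> = \<eta> * G \<tau>"
      proof (rule integral_unique)
        have 1: "((\<lambda>s. (\<eta> * t0) * f s) has_integral (\<eta> * t0) * 0) {0..1}"
          by (rule has_integral_mult_right[OF fint])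
        have 2: "((\<lambda>s. (\<eta> * (\<beta> * T)) * (f s * min s \<tau>)) has_integral (\<eta> * (\<beta> * T)) * (G \<tau> / (\<beta> * T))) {0..1}"
          by (rule has_integral_mult_right[OF int_min[OF tau]])
        have fe: "(\<lambda>s. f s * c s \<tau>) = (\<lambda>s. (\<eta> * t0) * f s + (\<eta> * (\<beta> * T)) * (f s * min s \<tau>))"
          by (rule ext) (simp add: ceq algebra_simps)
        show "((\<lambda>s. f s * c s \<tau>) has_integral \<eta> * G \<tau>) {0..1}"
          unfolding fe using has_integral_add[OF 1 2] T True by simp
      qed
      finally show ?thesis .
    qed
    have eqs: "\<And>\<tau>. \<tau> \<in> {0..1} \<Longrightarrow> f \<tau> * \<Psi> \<tau> = f \<tau> * (\<eta> * G \<tau>)" using PsiE by simp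
    have si: "set_integrable lborel {0..1} (\<lambda>\<tau>. f \<tau> * (\<eta> * G \<tau>))"
    proof -
      have "set_integrable lborel {0..1} (\<lambda>\<tau>. f \<tau> * \<Psi> \<tau>)" using VF unfolding \<Psi>_def by blast
      then show ?thesis using set_integrable_cong[of lborel lborel "{0..1}" "{0..1}" "\<lambda>\<tau>. f \<tau> * \<Psi> \<tau>" "\<lambda>\<tau>. f \<tau> * (\<eta> * G \<tau>)"] eqs by simp
    qed
    have "rv_variance M Y = (LINT \<tau>:{0..1}|lborel. f \<tau> * (\<eta> * G \<tau>))"
    proof -
      have "rv_variance M Y = (LINT \<tau>:{0..1}|lborel. f \<tau> * \<Psi> \<tau>)" using VF unfolding \<Psi>_def by blast
      also have "\<dots> = (LINT \<tau>:{0..1}|lborel. f \<tau> * (\<eta> * G \<tau>))"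
        by (rule set_lebesgue_integral_cong) (use eqs in auto)
      finally show ?thesis .
    qed
    also have "\<dots> = integral {0..1} (\<lambda>\<tau>. f \<tau> * (\<eta> * G \<tau>))"
      using si by (rule set_borel_integral_eq_integral(2))
    also have "\<dots> = \<eta> * (I2 / (\<beta> * T))"
      using has_integral_mult_right[OF int_fG, of \<eta>] unfolding I2_def
      by (intro integral_unique) (simp add: algebra_simps)
    finally show ?thesis using True unfolding I2_def by simp
  next
    case False
    then have b: "\<beta> = -1" using \<beta> by auto
    have ceq: "c s \<tau> = \<eta> * t0 * 1 + \<eta> * (\<beta> * T) * max s \<tau>" for s \<tau>
      using T b by (simp add: c_def t_def min_def max_def algebra_simps)
    have PsiE: "\<Psi> \<tau> = \<eta> * G 1 - \<eta> * G \<tau>" if tau: "\<tau> \<in> {0..1}" for \<tau>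
    proof -
      have "\<Psi> \<tau> = integral {0..1} (\<lambda>s. f s * c s \<tau>)"
        unfolding \<Psi>_def using VF tau by (intro set_borel_integral_eq_integral(2)) auto
      also have "\<dots> = \<eta> * G 1 - \<eta> * G \<tau>"
      proof (rule integral_unique)
        have 1: "((\<lambda>s. (\<eta> * t0) * f s) has_integral (\<eta> * t0) * 0) {0..1}"
          by (rule has_integral_mult_right[OF fint])
        have 2: "((\<lambda>s. (\<eta> * (\<beta> * T)) * (f s * max s \<tau>)) has_integral (\<eta> * (\<beta> * T)) * ((G 1 - G \<tau>) / (\<beta> * T))) {0..1}"
          by (rule has_integral_mult_right[OF int_max[OF tau]])
        have fe: "(\<lambda>s. f s * c s \<tau>) = (\<lambda>s. (\<eta> * t0) * f s + (\<eta> * (\<beta> * T)) * (f s * max s \<tau>))"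
          by (rule ext) (simp add: ceq algebra_simps)
        show "((\<lambda>s. f s * c s \<tau>) has_integral \<eta> * G 1 - \<eta> * G \<tau>) {0..1}"
          unfolding fe apply (rule has_integral_eq_rhs[OF has_integral_add[OF 1 2]])
          using T b by (simp add: field_simps)
      qed
      finally show ?thesis .
    qed
    have eqs: "\<And>\<tau>. \<tau> \<in> {0..1} \<Longrightarrow> f \<tau> * \<Psi> \<tau> = f \<tau> * (\<eta> * G 1 - \<eta> * G \<tau>)" using PsiE by simp
    have si: "set_integrable lborel {0..1} (\<lambda>\<tau>. f \<tau> * (\<eta> * G 1 - \<eta> * G \<tau>))"
    proof -
      have "set_integrable lborel {0..1} (\<lambda>\<tau>. f \<tau> * \<Psi> \<tau>)" using VF unfolding \<Psi>_def by blast
      then show ?thesis using set_integrable_cong[of lborel lborel "{0..1}" "{0..1}" "\<lambda>\<tau>. f \<tau> * \<Psi> \<tau>" "\<lambda>\<tau>. f \<tau> * (\<eta> * G 1 - \<eta> * G \<tau>)"] eqs by simp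
    qed
    have "rv_variance M Y = (LINT \<tau>:{0..1}|lborel. f \<tau> * (\<eta> * G 1 - \<eta> * G \<tau>))"
    proof -
      have "rv_variance M Y = (LINT \<tau>:{0..1}|lborel. f \<tau> * \<Psi> \<tau>)" using VF unfolding \<Psi>_def by blast
      also have "\<dots> = (LINT \<tau>:{0..1}|lborel. f \<tau> * (\<eta> * G 1 - \<eta> * G \<tau>))"
        by (rule set_lebesgue_integral_cong) (use eqs in auto)
      finally show ?thesis .
    qed
    also have "\<dots> = integral {0..1} (\<lambda>\<tau>. f \<tau> * (\<eta> * G 1 - \<eta> * G \<tau>))"
      using si by (rule set_borel_integral_eq_integral(2))
    also have "\<dots> = (\<eta> * G 1) * 0 - \<eta> * (I2 / (\<beta> * T))"
    proof (intro integral_unique)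
      have "((\<lambda>\<tau>. f \<tau> * (\<eta> * G 1) - \<eta> * (f \<tau> * G \<tau>)) has_integral (0 * (\<eta> * G 1) - \<eta> * (I2 / (\<beta> * T)))) {0..1}"
        unfolding I2_def
        by (intro has_integral_diff has_integral_mult_left has_integral_mult_right fint int_fG)
      then show "((\<lambda>\<tau>. f \<tau> * (\<eta> * G 1 - \<eta> * G \<tau>)) has_integral (\<eta> * G 1 * 0 - \<eta> * (I2 / (\<beta> * T)))) {0..1}"
        by (simp add: algebra_simps)
    qed
    finally show ?thesis using b unfolding I2_def by simp
  qed
qed




lemma Beta_pos: "a > 0 \<Longrightarrow> b > 0 \<Longrightarrow> Beta a b > (0::real)"
  by (simp add: Beta_def Gamma_real_pos)

lemma beta_step:
  assumes "x > 0" "y > 0"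
  shows "Beta y (x + 1) = x / (x + y) * Beta x (y::real)"
proof -
  have "x \<notin> \<int>\<^sub>\<le>\<^sub>0" using assms by auto
  from Beta_plus1_left[OF this, of y] assms show ?thesis
    by (simp add: Beta_commute field_simps)
qed

lemma var1:
  fixes M :: "'a measure" and X :: "real \<Rightarrow> 'a \<Rightarrow> real"
    and I :: "real set" and \<beta> t0 T \<kappa> \<mu> \<eta> :: real and Y1 :: "'a \<Rightarrow> real"
  assumes P: "prob_space M"
    and Iint: "is_interval I" and I0: "I \<subseteq> {0..}"
    and \<beta>: "\<beta> \<in> {-1, 1}" and t0: "t0 \<in> I" and T: "T > 0" and t1: "t0 + \<beta> * T \<in> I"
    and k: "\<kappa> > -1" and m: "\<mu> > -1"
    and noise: "(\<exists>\<sigma>2. wiener_process_param M X \<sigma>2 \<and> \<eta> = \<sigma>2)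
               \<or> (\<exists>\<nu>. poisson_process_intensity M X \<nu> \<and> \<eta> = \<nu>)"
    and Y1: "ms_integral01 M (jacobi_kernel \<mu> \<kappa> (\<beta> * T))
               (\<lambda>\<tau>. X (t0 + \<beta> * T * \<tau>)) Y1"
  shows "rv_variance M Y1 =
           (2 * \<eta> / T) * ((\<mu> + 1) / (2 * \<mu> + 2 * \<kappa> + 5))
           * (Beta (2 * \<mu> + 2) (2 * \<kappa> + 3) / (Beta (\<kappa> + 2) (\<mu> + 2))\<^sup>2)"
proof -
  have h: "\<beta> * T \<noteq> 0" using \<beta> T by auto
  have cs: "calc_setup (gab \<mu> \<kappa>) (jacobi_kernel \<mu> \<kappa> (\<beta> * T)) (\<beta> * T)"
    by unfold_locales (use h k m gab_cont gab_0 gab_1 gab_deriv in auto)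
  have V: "rv_variance M Y1 = \<eta> / T * integral {0..1} (\<lambda>x. (gab \<mu> \<kappa> x)\<^sup>2)"
    by (rule general_var[OF P Iint I0 \<beta> t0 T t1 noise Y1 cs])
  have "integral {0..1} (\<lambda>x. (gab \<mu> \<kappa> x)\<^sup>2) =
      1 / Beta (\<kappa> + 2) (\<mu> + 2) * (1 / Beta (\<kappa> + 2) (\<mu> + 2)) * Beta (\<kappa> + \<kappa> + 3) (\<mu> + \<mu> + 3)"
    using gab_prod[of \<mu> \<kappa> \<mu> \<kappa>] k m by (intro integral_unique) (simp add: power2_eq_square)
  also have "Beta (\<kappa> + \<kappa> + 3) (\<mu> + \<mu> + 3) = (2 * \<mu> + 2) / ((2 * \<mu> + 2) + (2 * \<kappa> + 3)) * Beta (2 * \<mu> + 2) (2 * \<kappa> + 3)"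
    using beta_step[of "2 * \<mu> + 2" "2 * \<kappa> + 3"] k m by (simp add: algebra_simps)
  finally have I: "integral {0..1} (\<lambda>x. (gab \<mu> \<kappa> x)\<^sup>2) = 1 / Beta (\<kappa> + 2) (\<mu> + 2) * (1 / Beta (\<kappa> + 2) (\<mu> + 2)) *
   ((2 * \<mu> + 2) / (2 * \<mu> + 2 + (2 * \<kappa> + 3)) * Beta (2 * \<mu> + 2) (2 * \<kappa> + 3))" .
  have Bp: "Beta (\<kappa> + 2) (\<mu> + 2) > 0" using k m by (intro Beta_pos) auto
  have d: "2 * \<mu> + 2 * \<kappa> + 5 > 0" using k m by auto
  show ?thesis unfolding V I using Bp d T
    by (simp add: field_simps power2_eq_square)
qed

lemma var2:
  fixes M :: "'a measure" and X :: "real \<Rightarrow> 'a \<Rightarrow> real"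
    and I :: "real set" and \<beta> t0 T \<kappa> \<mu> \<xi> \<eta> :: real and Y2 :: "'a \<Rightarrow> real"
  assumes P: "prob_space M"
    and Iint: "is_interval I" and I0: "I \<subseteq> {0..}"
    and \<beta>: "\<beta> \<in> {-1, 1}" and t0: "t0 \<in> I" and T: "T > 0" and t1: "t0 + \<beta> * T \<in> I"
    and k: "\<kappa> > -1" and m: "\<mu> > -1"
    and noise: "(\<exists>\<sigma>2. wiener_process_param M X \<sigma>2 \<and> \<eta> = \<sigma>2)
               \<or> (\<exists>\<nu>. poisson_process_intensity M X \<nu> \<and> \<eta> = \<nu>)"
    and Y2: "ms_integral01 M (jacobi_kernel_affine2 \<mu> \<kappa> \<xi> (\<beta> * T))
               (\<lambda>\<tau>. X (t0 + \<beta> * T * \<tau>)) Y2"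
  shows "rv_variance M Y2 =
           (jacobi_lambda1 \<mu> \<kappa> \<xi>)\<^sup>2 * (2 * \<eta> / T) * ((\<mu> + 2) / (2 * \<mu> + 2 * \<kappa> + 7))
             * (Beta (2 * \<mu> + 4) (2 * \<kappa> + 3) / (Beta (\<kappa> + 2) (\<mu> + 3))\<^sup>2)
         + (jacobi_lambda0 \<mu> \<kappa> \<xi>)\<^sup>2 * (2 * \<eta> / T) * ((\<mu> + 1) / (2 * \<mu> + 2 * \<kappa> + 7))
             * (Beta (2 * \<mu> + 2) (2 * \<kappa> + 5) / (Beta (\<kappa> + 3) (\<mu> + 2))\<^sup>2)
         + jacobi_lambda0 \<mu> \<kappa> \<xi> * jacobi_lambda1 \<mu> \<kappa> \<xi> * (2 * \<eta> / T)
             * (Beta (2 * \<mu> + 4) (2 * \<kappa> + 4) / (Beta (\<kappa> + 2) (\<mu> + 3) * Beta (\<kappa> + 3) (\<mu> + 2)))"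
proof -
  define l1 where "l1 = jacobi_lambda1 \<mu> \<kappa> \<xi>"
  define l0 where "l0 = jacobi_lambda0 \<mu> \<kappa> \<xi>"
  define g where "g x = l1 * gab (\<mu> + 1) \<kappa> x + l0 * gab \<mu> (\<kappa> + 1) x" for x
  have h: "\<beta> * T \<noteq> 0" using \<beta> T by auto
  have k1: "\<kappa> + 1 > -1" and m1: "\<mu> + 1 > -1" using k m by auto
  have cs: "calc_setup g (jacobi_kernel_affine2 \<mu> \<kappa> \<xi> (\<beta> * T)) (\<beta> * T)"
  proof
    show "\<beta> * T \<noteq> 0" by (rule h)
    show "continuous_on {0..1} g" unfolding g_def[abs_def]
      using gab_cont[OF m1 k] gab_cont[OF m k1] by (intro continuous_intros)
    show "g 0 = 0" using gab_0 k k1 by (simp add: g_def)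
    show "g 1 = 0" by (simp add: g_def gab_1)
    fix x :: real assume x: "x \<in> {0<..<1}"
    have d: "(g has_real_derivative l1 * (- (\<beta> * T) * jacobi_kernel (\<mu> + 1) \<kappa> (\<beta> * T) x)
        + l0 * (- (\<beta> * T) * jacobi_kernel \<mu> (\<kappa> + 1) (\<beta> * T) x)) (at x)"
      unfolding g_def[abs_def]
      by (intro DERIV_add DERIV_cmult gab_deriv h x)
    show "(g has_real_derivative - (\<beta> * T) * jacobi_kernel_affine2 \<mu> \<kappa> \<xi> (\<beta> * T) x) (at x)"
      by (rule DERIV_cong[OF d]) (simp add: jacobi_kernel_affine2_def l1_def l0_def algebra_simps)
  qed
  have V: "rv_variance M Y2 = \<eta> / T * integral {0..1} (\<lambda>x. (g x)\<^sup>2)"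
    by (rule general_var[OF P Iint I0 \<beta> t0 T t1 noise Y2 cs])
  define B1 where "B1 = Beta (\<kappa> + 2) (\<mu> + 3)"
  define B0 where "B0 = Beta (\<kappa> + 3) (\<mu> + 2)"
  have i11: "((\<lambda>x. gab (\<mu> + 1) \<kappa> x * gab (\<mu> + 1) \<kappa> x) has_integral 1 / B1 * (1 / B1) * Beta (2 * \<kappa> + 3) (2 * \<mu> + 5)) {0..1}"
    using gab_prod[OF m1 k m1 k] unfolding B1_def by (simp add: algebra_simps)
  have i10: "((\<lambda>x. gab (\<mu> + 1) \<kappa> x * gab \<mu> (\<kappa> + 1) x) has_integral 1 / B1 * (1 / B0) * Beta (2 * \<kappa> + 4) (2 * \<mu> + 4)) {0..1}"
    using gab_prod[OF m1 k m k1] unfolding B1_def B0_def by (simp add: algebra_simps)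
  have i00: "((\<lambda>x. gab \<mu> (\<kappa> + 1) x * gab \<mu> (\<kappa> + 1) x) has_integral 1 / B0 * (1 / B0) * Beta (2 * \<kappa> + 5) (2 * \<mu> + 3)) {0..1}"
    using gab_prod[OF m k1 m k1] unfolding B0_def by (simp add: algebra_simps)
  have sum: "((\<lambda>x. l1\<^sup>2 * (gab (\<mu> + 1) \<kappa> x * gab (\<mu> + 1) \<kappa> x) + (2 * l1 * l0) * (gab (\<mu> + 1) \<kappa> x * gab \<mu> (\<kappa> + 1) x)
      + l0\<^sup>2 * (gab \<mu> (\<kappa> + 1) x * gab \<mu> (\<kappa> + 1) x)) has_integral
      l1\<^sup>2 * (1 / B1 * (1 / B1) * Beta (2 * \<kappa> + 3) (2 * \<mu> + 5)) + (2 * l1 * l0) * (1 / B1 * (1 / B0) * Beta (2 * \<kappa> + 4) (2 * \<mu> + 4))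
      + l0\<^sup>2 * (1 / B0 * (1 / B0) * Beta (2 * \<kappa> + 5) (2 * \<mu> + 3))) {0..1}"
    by (intro has_integral_add has_integral_mult_right i11 i10 i00)
  have gsq: "(\<lambda>x. (g x)\<^sup>2) = (\<lambda>x. l1\<^sup>2 * (gab (\<mu> + 1) \<kappa> x * gab (\<mu> + 1) \<kappa> x) + (2 * l1 * l0) * (gab (\<mu> + 1) \<kappa> x * gab \<mu> (\<kappa> + 1) x)
      + l0\<^sup>2 * (gab \<mu> (\<kappa> + 1) x * gab \<mu> (\<kappa> + 1) x))"
    by (rule ext) (simp add: g_def power2_eq_square algebra_simps)
  have Iv: "integral {0..1} (\<lambda>x. (g x)\<^sup>2) = l1\<^sup>2 * (1 / B1 * (1 / B1) * Beta (2 * \<kappa> + 3) (2 * \<mu> + 5)) + (2 * l1 * l0) * (1 / B1 * (1 / B0) * Beta (2 * \<kappa> + 4) (2 * \<mu> + 4))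
      + l0\<^sup>2 * (1 / B0 * (1 / B0) * Beta (2 * \<kappa> + 5) (2 * \<mu> + 3))"
    unfolding gsq using sum by (rule integral_unique)
  have e1: "Beta (2 * \<kappa> + 3) (2 * \<mu> + 5) = (2 * \<mu> + 4) / ((2 * \<mu> + 4) + (2 * \<kappa> + 3)) * Beta (2 * \<mu> + 4) (2 * \<kappa> + 3)"
    using beta_step[of "2 * \<mu> + 4" "2 * \<kappa> + 3"] k m by (simp add: algebra_simps)
  have e0: "Beta (2 * \<kappa> + 5) (2 * \<mu> + 3) = (2 * \<mu> + 2) / ((2 * \<mu> + 2) + (2 * \<kappa> + 5)) * Beta (2 * \<mu> + 2) (2 * \<kappa> + 5)"
    using beta_step[of "2 * \<mu> + 2" "2 * \<kappa> + 5"] k m by (simp add: algebra_simps)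
  have ec: "Beta (2 * \<kappa> + 4) (2 * \<mu> + 4) = Beta (2 * \<mu> + 4) (2 * \<kappa> + 4)" by (rule Beta_commute)
  have B1p: "B1 > 0" unfolding B1_def using k m by (intro Beta_pos) auto
  have B0p: "B0 > 0" unfolding B0_def using k m by (intro Beta_pos) auto
  have d: "2 * \<mu> + 2 * \<kappa> + 7 > 0" using k m by auto
  have d1: "(2 * \<mu> + 4) + (2 * \<kappa> + 3) = 2 * \<mu> + 2 * \<kappa> + 7" and d2: "(2 * \<mu> + 2) + (2 * \<kappa> + 5) = 2 * \<mu> + 2 * \<kappa> + 7" by simp_all
  show ?thesis unfolding V Iv e1 e0 ec d1 d2 l1_def[symmetric] l0_def[symmetric] B1_def[symmetric] B0_def[symmetric]
    by (simp add: divide_inverse power2_eq_square algebra_simps)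
qed



theorem proposition5:
  fixes M :: "'a measure" and X :: "real \<Rightarrow> 'a \<Rightarrow> real"
    and I :: "real set" and \<beta> t0 T \<kappa> \<mu> \<xi> \<eta> :: real
    and Y1 Y2 :: "'a \<Rightarrow> real"
  assumes "prob_space M"
    and "open I" and "is_interval I" and "I \<noteq> {}" and "I \<subseteq> {0..}"
    and "\<beta> \<in> {-1, 1}" and "t0 \<in> I" and "T > 0" and "t0 + \<beta> * T \<in> I"
    and "\<kappa> > -1" and "\<mu> > -1" and "\<xi> \<in> {0..1}"
    and noise: "(\<exists>\<sigma>2. wiener_process_param M X \<sigma>2 \<and> \<eta> = \<sigma>2)
               \<or> (\<exists>\<nu>. poisson_process_intensity M X \<nu> \<and> \<eta> = \<nu>)"
    and Y1: "ms_integral01 M (jacobi_kernel \<mu> \<kappa> (\<beta> * T))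
               (\<lambda>\<tau>. X (t0 + \<beta> * T * \<tau>)) Y1"
    and Y2: "ms_integral01 M (jacobi_kernel_affine2 \<mu> \<kappa> \<xi> (\<beta> * T))
               (\<lambda>\<tau>. X (t0 + \<beta> * T * \<tau>)) Y2"
  shows "rv_variance M Y1 =
           (2 * \<eta> / T) * ((\<mu> + 1) / (2 * \<mu> + 2 * \<kappa> + 5))
           * (Beta (2 * \<mu> + 2) (2 * \<kappa> + 3) / (Beta (\<kappa> + 2) (\<mu> + 2))\<^sup>2)
       \<and> rv_variance M Y2 =
           (jacobi_lambda1 \<mu> \<kappa> \<xi>)\<^sup>2 * (2 * \<eta> / T) * ((\<mu> + 2) / (2 * \<mu> + 2 * \<kappa> + 7))
             * (Beta (2 * \<mu> + 4) (2 * \<kappa> + 3) / (Beta (\<kappa> + 2) (\<mu> + 3))\<^sup>2)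
         + (jacobi_lambda0 \<mu> \<kappa> \<xi>)\<^sup>2 * (2 * \<eta> / T) * ((\<mu> + 1) / (2 * \<mu> + 2 * \<kappa> + 7))
             * (Beta (2 * \<mu> + 2) (2 * \<kappa> + 5) / (Beta (\<kappa> + 3) (\<mu> + 2))\<^sup>2)
         + jacobi_lambda0 \<mu> \<kappa> \<xi> * jacobi_lambda1 \<mu> \<kappa> \<xi> * (2 * \<eta> / T)
             * (Beta (2 * \<mu> + 4) (2 * \<kappa> + 4) / (Beta (\<kappa> + 2) (\<mu> + 3) * Beta (\<kappa> + 3) (\<mu> + 2)))"
  using var1[OF assms(1,3,5,6,7,8,9,10,11) noise Y1]
        var2[OF assms(1,3,5,6,7,8,9,10,11) noise Y2] by blast

end
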